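(* Let $(W,S)$ be a Coxeter system with $S$ finite, and let $\mathcal{R}_W\subseteq S$ be a complete set of representatives of the $W$-conjugacy classes of elements of $Q_W$, with $c(W)$ the number of these classes. Then the abelianization $\operatorname{Ad}(Q_W)_{\mathrm{Ab}}$ is the free abelian group with basis $\{[e_s]\mid s\in\mathcal{R}_W\}$. In particular $\operatorname{Ad}(Q_W)_{\mathrm{Ab}}\cong\mathbb{Z}^{c(W)}$.
   Context: A Coxeter system $(W,S)$: $S$ finite, $m:S\times S\to\mathbb{N}\cup\{\infty\}$ with $m(s,s)=1$, $2\le m(s,t)=m(t,s)\le\infty$ for $s\ne t$, $W=\langle s\in S\mid (st)^{m(s,t)}=1\ (m(s,t)<\infty)\rangle$. The Coxeter quandle is $Q_W=\bigcup_{w\in W}w^{-1}Sw$ with $x\ast y=yxy$, and $\operatorname{Ad}(Q_W)=\langle e_x\ (x\in Q_W)\mid e_y^{-1}e_xe_y=e_{x\ast y}\rangle$. For a group $G$, $G_{\mathrm{Ab}}=G/[G,G]$ and $[g]$ denotes the image of $g$ in $G_{\mathrm{Ab}}$. *)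

theory Defs
  imports "HOL-Algebra.Algebra" "HOL-Library.Extended_Nat"
begin

text \<open>Words over generators Xg are lists of (generator, sign); True = x, False = x^-1.
  pres_rel Xg Rl is the congruence on such words generated by free cancellation and
  deletion of relators from Rl.\<close>

inductive_set pres_rel :: "'x set \<Rightarrow> ('x \<times> bool) list set \<Rightarrow> (('x \<times> bool) list \<times> ('x \<times> bool) list) set"
  for Xg Rl where
  prefl: "w \<in> lists (Xg \<times> UNIV) \<Longrightarrow> (w, w) \<in> pres_rel Xg Rl"
| psym: "(u, v) \<in> pres_rel Xg Rl \<Longrightarrow> (v, u) \<in> pres_rel Xg Rl"
| ptrans: "(u, v) \<in> pres_rel Xg Rl \<Longrightarrow> (v, w) \<in> pres_rel Xg Rl \<Longrightarrow> (u, w) \<in> pres_rel Xg Rl"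
| pcancel: "u \<in> lists (Xg \<times> UNIV) \<Longrightarrow> v \<in> lists (Xg \<times> UNIV) \<Longrightarrow> x \<in> Xg \<Longrightarrow>
      (u @ [(x, b), (x, \<not> b)] @ v, u @ v) \<in> pres_rel Xg Rl"
| prel: "u \<in> lists (Xg \<times> UNIV) \<Longrightarrow> v \<in> lists (Xg \<times> UNIV) \<Longrightarrow> r \<in> Rl \<Longrightarrow> r \<in> lists (Xg \<times> UNIV) \<Longrightarrow>
      (u @ r @ v, u @ v) \<in> pres_rel Xg Rl"

definition presented_group :: "'x set \<Rightarrow> ('x \<times> bool) list set \<Rightarrow> ('x \<times> bool) list set monoid" where
  "presented_group Xg Rl =
     \<lparr> carrier = lists (Xg \<times> UNIV) // pres_rel Xg Rl,
       monoid.mult = (\<lambda>A B. pres_rel Xg Rl `` {(SOME a. a \<in> A) @ (SOME b. b \<in> B)}),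
       one = pres_rel Xg Rl `` {[]} \<rparr>"

definition pres_gen :: "'x set \<Rightarrow> ('x \<times> bool) list set \<Rightarrow> 'x \<Rightarrow> ('x \<times> bool) list set" where
  "pres_gen Xg Rl x = pres_rel Xg Rl `` {[(x, True)]}"

text \<open>Coxeter matrix m with values in nat \<union> {\<infinity>} (enat). Relators (st)^{m(s,t)} for finite m(s,t);
  for s = t and m(s,s) = 1 this is s^2.\<close>
definition coxeter_relators :: "'a set \<Rightarrow> ('a \<Rightarrow> 'a \<Rightarrow> enat) \<Rightarrow> ('a \<times> bool) list set" where
  "coxeter_relators S m =
     {concat (replicate k [(s, True), (t, True)]) | s t k. s \<in> S \<and> t \<in> S \<and> m s t = enat k}"

definition coxeter_group :: "'a set \<Rightarrow> ('a \<Rightarrow> 'a \<Rightarrow> enat) \<Rightarrow> ('a \<times> bool) list set monoid" where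
  "coxeter_group S m = presented_group S (coxeter_relators S m)"

definition cox_gen :: "'a set \<Rightarrow> ('a \<Rightarrow> 'a \<Rightarrow> enat) \<Rightarrow> 'a \<Rightarrow> ('a \<times> bool) list set" where
  "cox_gen S m s = pres_gen S (coxeter_relators S m) s"

definition coxeter_quandle :: "'a set \<Rightarrow> ('a \<Rightarrow> 'a \<Rightarrow> enat) \<Rightarrow> ('a \<times> bool) list set set" where
  "coxeter_quandle S m =
     {inv\<^bsub>coxeter_group S m\<^esub> w \<otimes>\<^bsub>coxeter_group S m\<^esub> cox_gen S m s \<otimes>\<^bsub>coxeter_group S m\<^esub> w
       | w s. w \<in> carrier (coxeter_group S m) \<and> s \<in> S}"

definition quandle_op :: "'a set \<Rightarrow> ('a \<Rightarrow> 'a \<Rightarrow> enat) \<Rightarrow>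
    ('a \<times> bool) list set \<Rightarrow> ('a \<times> bool) list set \<Rightarrow> ('a \<times> bool) list set" where
  "quandle_op S m x y = y \<otimes>\<^bsub>coxeter_group S m\<^esub> x \<otimes>\<^bsub>coxeter_group S m\<^esub> y"

text \<open>Adjoint group Ad(Q_W) = \<langle>e_x (x \<in> Q_W) | e_y^-1 e_x e_y = e_{x*y}\<rangle>,
  relators e_y^-1 e_x e_y e_{x*y}^-1.\<close>
definition adjoint_relators :: "'a set \<Rightarrow> ('a \<Rightarrow> 'a \<Rightarrow> enat) \<Rightarrow>
    (('a \<times> bool) list set \<times> bool) list set" where
  "adjoint_relators S m =
     {[(y, False), (x, True), (y, True), (quandle_op S m x y, False)] | x y.
        x \<in> coxeter_quandle S m \<and> y \<in> coxeter_quandle S m}"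

definition adjoint_group :: "'a set \<Rightarrow> ('a \<Rightarrow> 'a \<Rightarrow> enat) \<Rightarrow>
    (('a \<times> bool) list set \<times> bool) list set monoid" where
  "adjoint_group S m = presented_group (coxeter_quandle S m) (adjoint_relators S m)"

definition adj_gen :: "'a set \<Rightarrow> ('a \<Rightarrow> 'a \<Rightarrow> enat) \<Rightarrow> ('a \<times> bool) list set \<Rightarrow>
    (('a \<times> bool) list set \<times> bool) list set" where
  "adj_gen S m x = pres_gen (coxeter_quandle S m) (adjoint_relators S m) x"

definition abelianization :: "('g, 'b) monoid_scheme \<Rightarrow> 'g set monoid" where
  "abelianization G = G Mod (derived G (carrier G))"

definition ab_class :: "('g, 'b) monoid_scheme \<Rightarrow> 'g \<Rightarrow> 'g set" where
  "ab_class G g = derived G (carrier G) #>\<^bsub>G\<^esub> g"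

end

theory Submission
  imports Defs
begin


lemma pres_rel_lists:
  assumes "(u, v) \<in> pres_rel Xg Rl"
  shows "u \<in> lists (Xg \<times> UNIV) \<and> v \<in> lists (Xg \<times> UNIV)"
  using assms by induction auto

lemma pres_rel_equiv: "equiv (lists (Xg \<times> UNIV)) (pres_rel Xg Rl)"
proof (rule equivI)
  show "pres_rel Xg Rl \<subseteq> lists (Xg \<times> UNIV) \<times> lists (Xg \<times> UNIV)"
    by (rule subrelI) (auto dest: pres_rel_lists)
  show "refl_on (lists (Xg \<times> UNIV)) (pres_rel Xg Rl)"
  proof -
    have "pres_rel Xg Rl \<subseteq> lists (Xg \<times> UNIV) \<times> lists (Xg \<times> UNIV)"
      by (rule subrelI) (auto dest: pres_rel_lists)
    then show ?thesis unfolding refl_on_def by (auto intro: prefl)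
  qed
  show "sym (pres_rel Xg Rl)" unfolding sym_def by (simp add: psym)
  show "trans (pres_rel Xg Rl)" unfolding trans_def using ptrans by fast
qed

lemma pres_rel_app_left:
  assumes "(u, v) \<in> pres_rel Xg Rl" "w \<in> lists (Xg \<times> UNIV)"
  shows "(w @ u, w @ v) \<in> pres_rel Xg Rl"
  using assms
proof induction
  case (prefl u) then show ?case by (intro pres_rel.prefl) auto
next
  case (psym u v) then show ?case by (simp add: pres_rel.psym)
next
  case (ptrans u v w')
  then have "(w @ u, w @ v) \<in> pres_rel Xg Rl" "(w @ v, w @ w') \<in> pres_rel Xg Rl" by simp_all
  then show ?case by (rule pres_rel.ptrans)
next
  case (pcancel u v x b)
  then show ?case using pres_rel.pcancel[of "w @ u" Xg v x b Rl] by simp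
next
  case (prel u v r)
  then show ?case using pres_rel.prel[of "w @ u" Xg v r Rl] by simp
qed

lemma pres_rel_app_right:
  assumes "(u, v) \<in> pres_rel Xg Rl" "w \<in> lists (Xg \<times> UNIV)"
  shows "(u @ w, v @ w) \<in> pres_rel Xg Rl"
  using assms
proof induction
  case (prefl u) then show ?case by (intro pres_rel.prefl) auto
next
  case (psym u v) then show ?case by (simp add: pres_rel.psym)
next
  case (ptrans u v w')
  then have "(u @ w, v @ w) \<in> pres_rel Xg Rl" "(v @ w, w' @ w) \<in> pres_rel Xg Rl" by simp_all
  then show ?case by (rule pres_rel.ptrans)
next
  case (pcancel u v x b)
  then show ?case using pres_rel.pcancel[of u Xg "v @ w" x b Rl] by simp
next
  case (prel u v r)
  then show ?case using pres_rel.prel[of u Xg "v @ w" r Rl] by simp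
qed

lemma pres_rel_app:
  assumes "(u, u') \<in> pres_rel Xg Rl" "(v, v') \<in> pres_rel Xg Rl"
  shows "(u @ v, u' @ v') \<in> pres_rel Xg Rl"
proof -
  have "(u @ v, u' @ v) \<in> pres_rel Xg Rl"
    using assms(1) pres_rel_lists[OF assms(2)] by (intro pres_rel_app_right) simp_all
  moreover have "(u' @ v, u' @ v') \<in> pres_rel Xg Rl"
    using assms(2) pres_rel_lists[OF assms(1)] by (intro pres_rel_app_left) simp_all
  ultimately show ?thesis by (rule ptrans)
qed

lemma pres_mult:
  assumes "u \<in> lists (Xg \<times> UNIV)" "v \<in> lists (Xg \<times> UNIV)"
  shows "pres_rel Xg Rl `` {u} \<otimes>\<^bsub>presented_group Xg Rl\<^esub> pres_rel Xg Rl `` {v} = pres_rel Xg Rl `` {u @ v}"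
proof -
  let ?P = "pres_rel Xg Rl"
  define a where "a = (SOME a. a \<in> ?P `` {u})"
  define b where "b = (SOME b. b \<in> ?P `` {v})"
  have hu: "u \<in> ?P `` {u}" and hv: "v \<in> ?P `` {v}" using prefl[OF assms(1)] prefl[OF assms(2)] by simp_all
  have "a \<in> ?P `` {u}" unfolding a_def using hu by (rule someI)
  moreover have "b \<in> ?P `` {v}" unfolding b_def using hv by (rule someI)
  ultimately have "(u @ v, a @ b) \<in> ?P" by (intro pres_rel_app) simp_all
  then have "?P `` {a @ b} = ?P `` {u @ v}"
    by (rule equiv_class_eq[OF pres_rel_equiv psym])
  then show ?thesis unfolding presented_group_def a_def b_def by simp
qed

definition invw :: "('x \<times> bool) list \<Rightarrow> ('x \<times> bool) list" where
  "invw l = rev (map (\<lambda>(x, b). (x, \<not> b)) l)"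

lemma invw_lists: "l \<in> lists (Xg \<times> UNIV) \<Longrightarrow> invw l \<in> lists (Xg \<times> UNIV)"
  unfolding invw_def by auto

lemma invw_cancel:
  "l \<in> lists (Xg \<times> UNIV) \<Longrightarrow> (invw l @ l, []) \<in> pres_rel Xg Rl"
proof (induction l)
  case Nil then show ?case by (auto intro: prefl simp: invw_def)
next
  case (Cons a l)
  obtain x b where a: "a = (x, b)" by force
  have il: "invw l \<in> lists (Xg \<times> UNIV)" using Cons invw_lists by auto
  have "(invw l @ [(x, \<not> b), (x, \<not> \<not> b)] @ l, invw l @ l) \<in> pres_rel Xg Rl"
    using Cons a il by (intro pcancel) auto
  then have "(invw (a # l) @ a # l, invw l @ l) \<in> pres_rel Xg Rl"
    using a by (simp add: invw_def)
  moreover have "(invw l @ l, []) \<in> pres_rel Xg Rl" using Cons by simp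
  ultimately show ?case by (rule ptrans)
qed

lemma pres_classE:
  assumes "A \<in> carrier (presented_group Xg Rl)"
  obtains u where "u \<in> lists (Xg \<times> UNIV)" "A = pres_rel Xg Rl `` {u}"
  using assms unfolding presented_group_def by (auto elim!: quotientE)

lemma pres_class_in:
  "u \<in> lists (Xg \<times> UNIV) \<Longrightarrow> pres_rel Xg Rl `` {u} \<in> carrier (presented_group Xg Rl)"
  unfolding presented_group_def by (auto intro: quotientI)

lemma pres_one: "one (presented_group Xg Rl) = pres_rel Xg Rl `` {[]}"
  unfolding presented_group_def by simp

lemma group_presented: "group (presented_group Xg Rl)"
proof (rule groupI)
  fix x y assume "x \<in> carrier (presented_group Xg Rl)" "y \<in> carrier (presented_group Xg Rl)"
  then obtain u v where uv: "u \<in> lists (Xg \<times> UNIV)" "x = pres_rel Xg Rl `` {u}"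
    "v \<in> lists (Xg \<times> UNIV)" "y = pres_rel Xg Rl `` {v}" by (elim pres_classE) blast
  have "x \<otimes>\<^bsub>presented_group Xg Rl\<^esub> y = pres_rel Xg Rl `` {u @ v}"
    unfolding uv(2,4) by (rule pres_mult[OF uv(1,3)])
  then show "x \<otimes>\<^bsub>presented_group Xg Rl\<^esub> y \<in> carrier (presented_group Xg Rl)"
    using pres_class_in[of "u @ v" Xg Rl] uv by simp
next
  show "one (presented_group Xg Rl) \<in> carrier (presented_group Xg Rl)"
    unfolding pres_one by (rule pres_class_in) simp
next
  fix x y z assume "x \<in> carrier (presented_group Xg Rl)" "y \<in> carrier (presented_group Xg Rl)"
     "z \<in> carrier (presented_group Xg Rl)"
  then obtain u v w where uv: "u \<in> lists (Xg \<times> UNIV)" "x = pres_rel Xg Rl `` {u}"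
    "v \<in> lists (Xg \<times> UNIV)" "y = pres_rel Xg Rl `` {v}" 
    "w \<in> lists (Xg \<times> UNIV)" "z = pres_rel Xg Rl `` {w}" by (elim pres_classE) blast
  have uvl: "u @ v \<in> lists (Xg \<times> UNIV)" "v @ w \<in> lists (Xg \<times> UNIV)" using uv by auto
  show "x \<otimes>\<^bsub>presented_group Xg Rl\<^esub> y \<otimes>\<^bsub>presented_group Xg Rl\<^esub> z =
        x \<otimes>\<^bsub>presented_group Xg Rl\<^esub> (y \<otimes>\<^bsub>presented_group Xg Rl\<^esub> z)"
    unfolding uv(2,4,6) pres_mult[OF uv(1,3)] pres_mult[OF uv(3,5)] pres_mult[OF uvl(1) uv(5)]
      pres_mult[OF uv(1) uvl(2)] by simp
next
  fix x assume "x \<in> carrier (presented_group Xg Rl)"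
  then obtain u where u: "u \<in> lists (Xg \<times> UNIV)" "x = pres_rel Xg Rl `` {u}" by (rule pres_classE)
  show "one (presented_group Xg Rl) \<otimes>\<^bsub>presented_group Xg Rl\<^esub> x = x"
    unfolding u(2) pres_one using pres_mult[of "[]" Xg u Rl] u(1) by simp
next
  fix x assume "x \<in> carrier (presented_group Xg Rl)"
  then obtain u where u: "u \<in> lists (Xg \<times> UNIV)" "x = pres_rel Xg Rl `` {u}" by (rule pres_classE)
  have "pres_rel Xg Rl `` {invw u} \<otimes>\<^bsub>presented_group Xg Rl\<^esub> x = pres_rel Xg Rl `` {invw u @ u}"
    unfolding u(2) by (rule pres_mult[OF invw_lists[OF u(1)] u(1)])
  also have "\<dots> = pres_rel Xg Rl `` {[]}"
    by (rule equiv_class_eq[OF pres_rel_equiv invw_cancel[OF u(1)]])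
  finally have "pres_rel Xg Rl `` {invw u} \<otimes>\<^bsub>presented_group Xg Rl\<^esub> x = one (presented_group Xg Rl)"
    by (simp add: pres_one)
  then show "\<exists>y\<in>carrier (presented_group Xg Rl). y \<otimes>\<^bsub>presented_group Xg Rl\<^esub> x = one (presented_group Xg Rl)"
    using pres_class_in[OF invw_lists[OF u(1)]] by blast
qed




fun ev :: "('g, 'c) monoid_scheme \<Rightarrow> ('x \<Rightarrow> 'g) \<Rightarrow> ('x \<times> bool) list \<Rightarrow> 'g" where
  "ev H f [] = \<one>\<^bsub>H\<^esub>"
| "ev H f ((x, b) # l) = (if b then f x else inv\<^bsub>H\<^esub> (f x)) \<otimes>\<^bsub>H\<^esub> ev H f l"

lemma (in group) ev_closed:
  "f ` Xg \<subseteq> carrier G \<Longrightarrow> l \<in> lists (Xg \<times> UNIV) \<Longrightarrow> ev G f l \<in> carrier G"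
  by (induction l) auto

lemma (in group) ev_append:
  assumes "f ` Xg \<subseteq> carrier G" "u \<in> lists (Xg \<times> UNIV)" "v \<in> lists (Xg \<times> UNIV)"
  shows "ev G f (u @ v) = ev G f u \<otimes> ev G f v"
  using assms(2)
proof (induction u)
  case Nil then show ?case using ev_closed[OF assms(1,3)] by simp
next
  case (Cons a u)
  obtain x b where a: "a = (x, b)" by force
  have "f x \<in> carrier G" using Cons a assms(1) by auto
  then show ?case using Cons a ev_closed[OF assms(1)] assms(3) by (auto simp: m_assoc)
qed

lemma (in group) ev_resp:
  assumes f: "f ` Xg \<subseteq> carrier G" and R: "\<forall>r\<in>Rl. r \<in> lists (Xg \<times> UNIV) \<longrightarrow> ev G f r = \<one>"
    and uv: "(u, v) \<in> pres_rel Xg Rl"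
  shows "ev G f u = ev G f v"
  using uv
proof induction
  case (pcancel u v x b)
  have fx: "f x \<in> carrier G" using pcancel f by auto
  have ev_v: "ev G f v \<in> carrier G" using ev_closed[OF f] pcancel by simp
  have l2: "[(x, b), (x, \<not> b)] @ v \<in> lists (Xg \<times> UNIV)" using pcancel by auto
  have e2: "ev G f ([(x, b), (x, \<not> b)] @ v) = ev G f v"
  proof (cases b)
    case True
    then show ?thesis using fx ev_v by (simp add: m_assoc[symmetric])
  next
    case False
    then show ?thesis using fx ev_v by (simp add: m_assoc[symmetric])
  qed
  show ?case using e2 ev_append[OF f pcancel(1) l2] ev_append[OF f pcancel(1,2)] by simp
next
  case (prel u v r)
  have "ev G f (u @ r @ v) = ev G f u \<otimes> (ev G f r \<otimes> ev G f v)"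
    using prel by (simp add: ev_append[OF f])
  then show ?case using R prel by (simp add: ev_append[OF f] ev_closed[OF f])
qed auto

lemma (in group) pres_hom:
  assumes f: "f ` Xg \<subseteq> carrier G" and R: "\<forall>r\<in>Rl. r \<in> lists (Xg \<times> UNIV) \<longrightarrow> ev G f r = \<one>"
  shows "(\<lambda>A. ev G f (SOME a. a \<in> A)) \<in> hom (presented_group Xg Rl) G"
    and "\<And>u. u \<in> lists (Xg \<times> UNIV) \<Longrightarrow> (\<lambda>A. ev G f (SOME a. a \<in> A)) (pres_rel Xg Rl `` {u}) = ev G f u"
proof -
  show val: "(\<lambda>A. ev G f (SOME a. a \<in> A)) (pres_rel Xg Rl `` {u}) = ev G f u"
    if u: "u \<in> lists (Xg \<times> UNIV)" for u
  proof -
    have hu: "u \<in> pres_rel Xg Rl `` {u}" using prefl[OF u] by simp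
    have "(SOME a. a \<in> pres_rel Xg Rl `` {u}) \<in> pres_rel Xg Rl `` {u}" using hu by (rule someI)
    then have "(u, SOME a. a \<in> pres_rel Xg Rl `` {u}) \<in> pres_rel Xg Rl" by simp
    then show ?thesis using ev_resp[OF f R] by simp
  qed
  show "(\<lambda>A. ev G f (SOME a. a \<in> A)) \<in> hom (presented_group Xg Rl) G"
  proof (rule homI)
    fix x assume "x \<in> carrier (presented_group Xg Rl)"
    then obtain u where u: "u \<in> lists (Xg \<times> UNIV)" "x = pres_rel Xg Rl `` {u}" by (rule pres_classE)
    show "ev G f (SOME a. a \<in> x) \<in> carrier G" using val[OF u(1)] ev_closed[OF f u(1)] u(2) by simp
  next
    fix x y assume "x \<in> carrier (presented_group Xg Rl)" "y \<in> carrier (presented_group Xg Rl)"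
    then obtain u v where u: "u \<in> lists (Xg \<times> UNIV)" "x = pres_rel Xg Rl `` {u}"
      and v: "v \<in> lists (Xg \<times> UNIV)" "y = pres_rel Xg Rl `` {v}" by (elim pres_classE) blast
    have uvl: "u @ v \<in> lists (Xg \<times> UNIV)" using u v by simp
    show "ev G f (SOME a. a \<in> x \<otimes>\<^bsub>presented_group Xg Rl\<^esub> y) = ev G f (SOME a. a \<in> x) \<otimes> ev G f (SOME a. a \<in> y)"
      using val[OF uvl] val[OF u(1)] val[OF v(1)] unfolding u(2) v(2) pres_mult[OF u(1) v(1)]
      by (simp add: ev_append[OF f u(1) v(1)])
  qed
qed

lemma hom_ev:
  assumes G: "group G" and H: "group H" and g: "g \<in> hom G H" and f: "f ` Xg \<subseteq> carrier G"
    and l: "l \<in> lists (Xg \<times> UNIV)"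
  shows "g (ev G f l) = ev H (g \<circ> f) l"
  using l
proof (induction l)
  case Nil then show ?case using hom_one[OF g G H] by simp
next
  case (Cons a l)
  obtain x b where a: "a = (x, b)" by force
  have fx: "f x \<in> carrier G" using Cons a f by auto
  have gh: "group_hom G H g" using G H g by (simp add: group_hom_def group_hom_axioms_def)
  have el: "ev G f l \<in> carrier G" using group.ev_closed[OF G f] Cons by simp
  show ?case
  proof (cases b)
    case True
    then show ?thesis using Cons a fx el group_hom.hom_mult[OF gh] by simp
  next
    case False
    then show ?thesis using Cons a fx el group_hom.hom_mult[OF gh] group_hom.hom_inv[OF gh, OF fx]
      group.inv_closed[OF G fx] by simp
  qed
qed

lemma pres_gen_in: "x \<in> Xg \<Longrightarrow> pres_gen Xg Rl x \<in> carrier (presented_group Xg Rl)"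
  unfolding pres_gen_def by (rule pres_class_in) simp

lemma pres_gen_inv:
  assumes x: "x \<in> Xg"
  shows "pres_rel Xg Rl `` {[(x, False)]} = inv\<^bsub>presented_group Xg Rl\<^esub> pres_gen Xg Rl x"
proof -
  have l1: "[(x, False)] \<in> lists (Xg \<times> UNIV)" "[(x, True)] \<in> lists (Xg \<times> UNIV)" using x by auto
  have "([] @ [(x, False), (x, \<not> False)] @ [], [] @ []) \<in> pres_rel Xg Rl"
    using x by (intro pcancel) auto
  then have "pres_rel Xg Rl `` {[(x, False), (x, True)]} = pres_rel Xg Rl `` {[]}"
    by (intro equiv_class_eq[OF pres_rel_equiv]) simp
  then have "pres_rel Xg Rl `` {[(x, False)]} \<otimes>\<^bsub>presented_group Xg Rl\<^esub> pres_gen Xg Rl x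
      = \<one>\<^bsub>presented_group Xg Rl\<^esub>"
    unfolding pres_gen_def pres_mult[OF l1] pres_one by simp
  then show ?thesis
    using group.inv_equality[OF group_presented _ pres_gen_in[OF x] pres_class_in[OF l1(1)]]
    by simp
qed

lemma class_ev:
  "u \<in> lists (Xg \<times> UNIV) \<Longrightarrow> pres_rel Xg Rl `` {u} = ev (presented_group Xg Rl) (pres_gen Xg Rl) u"
proof (induction u)
  case Nil then show ?case by (simp add: pres_one)
next
  case (Cons a u)
  obtain x b where a: "a = (x, b)" by force
  have x: "x \<in> Xg" and u: "u \<in> lists (Xg \<times> UNIV)" and l1: "[(x, b)] \<in> lists (Xg \<times> UNIV)"
    using Cons a by auto
  have "pres_rel Xg Rl `` {a # u} = pres_rel Xg Rl `` {[(x, b)]} \<otimes>\<^bsub>presented_group Xg Rl\<^esub> pres_rel Xg Rl `` {u}"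
    using pres_mult[OF l1 u] a by simp
  moreover have "pres_rel Xg Rl `` {[(x, b)]} = (if b then pres_gen Xg Rl x else inv\<^bsub>presented_group Xg Rl\<^esub> (pres_gen Xg Rl x))"
    using pres_gen_inv[OF x, of Rl] unfolding pres_gen_def by (cases b) simp_all
  ultimately show ?case using Cons.IH[OF u] a by simp
qed

lemma relator_one:
  "r \<in> Rl \<Longrightarrow> r \<in> lists (Xg \<times> UNIV) \<Longrightarrow> pres_rel Xg Rl `` {r} = \<one>\<^bsub>presented_group Xg Rl\<^esub>"
proof -
  assume r: "r \<in> Rl" "r \<in> lists (Xg \<times> UNIV)"
  have "([] @ r @ [], [] @ []) \<in> pres_rel Xg Rl" using r by (intro prel) simp_all
  then have "(r, []) \<in> pres_rel Xg Rl" by simp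
  then show ?thesis unfolding pres_one by (rule equiv_class_eq[OF pres_rel_equiv])
qed

lemma pres_hom_agree:
  assumes H: "group H" and g1: "g1 \<in> hom (presented_group Xg Rl) H" and g2: "g2 \<in> hom (presented_group Xg Rl) H"
    and agree: "\<And>x. x \<in> Xg \<Longrightarrow> g1 (pres_gen Xg Rl x) = g2 (pres_gen Xg Rl x)"
    and A: "A \<in> carrier (presented_group Xg Rl)"
  shows "g1 A = g2 A"
proof -
  obtain u where u: "u \<in> lists (Xg \<times> UNIV)" "A = pres_rel Xg Rl `` {u}" using A by (rule pres_classE)
  have f: "pres_gen Xg Rl ` Xg \<subseteq> carrier (presented_group Xg Rl)" by (rule image_subsetI, rule pres_gen_in)
  have "l \<in> lists (Xg \<times> UNIV) \<Longrightarrow> ev H (g1 \<circ> pres_gen Xg Rl) l = ev H (g2 \<circ> pres_gen Xg Rl) l" for l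
  proof (induction l)
    case (Cons a l)
    obtain x b where a: "a = (x, b)" by force
    then show ?case using Cons agree[of x] by simp
  qed simp
  then have e: "ev H (g1 \<circ> pres_gen Xg Rl) u = ev H (g2 \<circ> pres_gen Xg Rl) u" using u(1) .
  have "g1 A = g1 (ev (presented_group Xg Rl) (pres_gen Xg Rl) u)" using u(2) class_ev[OF u(1)] by simp
  also have "\<dots> = ev H (g1 \<circ> pres_gen Xg Rl) u" by (rule hom_ev[OF group_presented H g1 f u(1)])
  also have "\<dots> = ev H (g2 \<circ> pres_gen Xg Rl) u" by (rule e)
  also have "\<dots> = g2 (ev (presented_group Xg Rl) (pres_gen Xg Rl) u)" by (rule hom_ev[OF group_presented H g2 f u(1), symmetric])
  also have "\<dots> = g2 A" using u(2) class_ev[OF u(1)] by simp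
  finally show ?thesis .
qed




lemma (in group) cancel1: "x \<in> carrier G \<Longrightarrow> y \<in> carrier G \<Longrightarrow> x \<otimes> (inv x \<otimes> y) = y"
  by (simp add: m_assoc[symmetric])

lemma (in group) cancel2: "x \<in> carrier G \<Longrightarrow> y \<in> carrier G \<Longrightarrow> inv x \<otimes> (x \<otimes> y) = y"
  by (simp add: m_assoc[symmetric])

lemma (in group) conj_conj:
  assumes "a \<in> carrier G" "w \<in> carrier G" "y \<in> carrier G"
  shows "inv y \<otimes> (inv w \<otimes> a \<otimes> w) \<otimes> y = inv (w \<otimes> y) \<otimes> a \<otimes> (w \<otimes> y)"
  using assms by (simp add: inv_mult_group m_assoc)

lemma (in group) conj_back:
  assumes "b \<in> carrier G" "v \<in> carrier G" "q = inv v \<otimes> b \<otimes> v"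
  shows "b = inv (inv v) \<otimes> q \<otimes> inv v"
  using assms by (simp add: m_assoc cancel1)

lemma (in group) conj_sq:
  assumes "a \<in> carrier G" "w \<in> carrier G" "a \<otimes> a = \<one>"
  shows "(inv w \<otimes> a \<otimes> w) \<otimes> (inv w \<otimes> a \<otimes> w) = \<one>"
proof -
  have "(inv w \<otimes> a \<otimes> w) \<otimes> (inv w \<otimes> a \<otimes> w) = inv w \<otimes> (a \<otimes> a) \<otimes> w"
    using assms(1,2) by (simp add: m_assoc cancel1)
  then show ?thesis using assms by simp
qed

lemma (in comm_group) rel_cancel:
  assumes "a \<in> carrier G" "b \<in> carrier G" "c \<in> carrier G"
    and "inv a \<otimes> (b \<otimes> (a \<otimes> (inv c \<otimes> \<one>))) = \<one>"
  shows "b = c"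
proof -
  have "inv a \<otimes> (b \<otimes> (a \<otimes> (inv c \<otimes> \<one>))) = b \<otimes> inv c"
    using assms(1-3) by (simp add: m_lcomm[of "inv a" b] cancel2)
  then have "b \<otimes> inv c = \<one>" using assms(4) by simp
  then have "b \<otimes> inv c \<otimes> c = c" using assms(3) by simp
  then show ?thesis using assms(2,3) by (simp add: m_assoc)
qed

locale coxsetup =
  fixes S :: "'a set" and m :: "'a \<Rightarrow> 'a \<Rightarrow> enat" and Rp :: "'a set"
  assumes m_diag: "\<forall>s\<in>S. m s s = 1"
    and R_sub: "Rp \<subseteq> S"
    and R_cover: "\<forall>q\<in>coxeter_quandle S m. \<exists>s\<in>Rp. \<exists>w\<in>carrier (coxeter_group S m).
                    q = inv\<^bsub>coxeter_group S m\<^esub> w \<otimes>\<^bsub>coxeter_group S m\<^esub> cox_gen S m s \<otimes>\<^bsub>coxeter_group S m\<^esub> w"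
    and R_distinct: "\<forall>s\<in>Rp. \<forall>t\<in>Rp. (\<exists>w\<in>carrier (coxeter_group S m).
                    cox_gen S m t = inv\<^bsub>coxeter_group S m\<^esub> w \<otimes>\<^bsub>coxeter_group S m\<^esub> cox_gen S m s \<otimes>\<^bsub>coxeter_group S m\<^esub> w)
                    \<longrightarrow> s = t"
begin

abbreviation "W \<equiv> coxeter_group S m"
abbreviation "Q \<equiv> coxeter_quandle S m"

lemma W_group: "group W"
  unfolding coxeter_group_def by (rule group_presented)

sublocale Wg: group W by (rule W_group)

lemma gen_in: "s \<in> S \<Longrightarrow> cox_gen S m s \<in> carrier W"
  unfolding cox_gen_def coxeter_group_def by (rule pres_gen_in)

lemma gen_sq: assumes s: "s \<in> S" shows "cox_gen S m s \<otimes>\<^bsub>W\<^esub> cox_gen S m s = \<one>\<^bsub>W\<^esub>"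
proof -
  have l1: "[(s, True)] \<in> lists (S \<times> UNIV)" using s by simp
  have "m s s = enat 1" using m_diag s by (simp add: one_enat_def)
  then have r: "[(s, True), (s, True)] \<in> coxeter_relators S m"
    unfolding coxeter_relators_def using s
    by (intro CollectI exI[of _ s] exI[of _ s] exI[of _ 1]) simp
  have "cox_gen S m s \<otimes>\<^bsub>W\<^esub> cox_gen S m s = pres_rel S (coxeter_relators S m) `` {[(s, True)] @ [(s, True)]}"
    unfolding cox_gen_def coxeter_group_def pres_gen_def by (rule pres_mult[OF l1 l1])
  also have "\<dots> = \<one>\<^bsub>W\<^esub>" unfolding coxeter_group_def using r s by (simp add: relator_one)
  finally show ?thesis .
qed

lemma gen_inv: assumes s: "s \<in> S" shows "inv\<^bsub>W\<^esub> cox_gen S m s = cox_gen S m s"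
  using group.inv_equality[OF W_group gen_sq[OF s] gen_in[OF s] gen_in[OF s]] .

lemma Q_def2: "q \<in> Q \<longleftrightarrow> (\<exists>w s. q = inv\<^bsub>W\<^esub> w \<otimes>\<^bsub>W\<^esub> cox_gen S m s \<otimes>\<^bsub>W\<^esub> w \<and> w \<in> carrier W \<and> s \<in> S)"
  unfolding coxeter_quandle_def by blast

lemma Q_carrier: "q \<in> Q \<Longrightarrow> q \<in> carrier W"
  using Q_def2 gen_in by auto

lemma Q_sq: "q \<in> Q \<Longrightarrow> q \<otimes>\<^bsub>W\<^esub> q = \<one>\<^bsub>W\<^esub>"
  using Q_def2 group.conj_sq[OF W_group gen_in _ gen_sq] by metis

lemma Q_inv: "q \<in> Q \<Longrightarrow> inv\<^bsub>W\<^esub> q = q"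
  using group.inv_equality[OF W_group Q_sq Q_carrier Q_carrier] .

lemma gen_Q: assumes s: "s \<in> S" shows "cox_gen S m s \<in> Q"
proof -
  have "cox_gen S m s = inv\<^bsub>W\<^esub> \<one>\<^bsub>W\<^esub> \<otimes>\<^bsub>W\<^esub> cox_gen S m s \<otimes>\<^bsub>W\<^esub> \<one>\<^bsub>W\<^esub>"
    using gen_in[OF s] by simp
  then show ?thesis unfolding Q_def2 using s Wg.one_closed by blast
qed

lemma op_conj: "x \<in> Q \<Longrightarrow> y \<in> Q \<Longrightarrow> quandle_op S m x y = inv\<^bsub>W\<^esub> y \<otimes>\<^bsub>W\<^esub> x \<otimes>\<^bsub>W\<^esub> y"
  unfolding quandle_op_def by (simp add: Q_inv)

lemma op_Q: assumes x: "x \<in> Q" and y: "y \<in> Q" shows "quandle_op S m x y \<in> Q"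
proof -
  obtain w s where ws: "x = inv\<^bsub>W\<^esub> w \<otimes>\<^bsub>W\<^esub> cox_gen S m s \<otimes>\<^bsub>W\<^esub> w" "w \<in> carrier W" "s \<in> S"
    using x Q_def2 by blast
  have "quandle_op S m x y = inv\<^bsub>W\<^esub> (w \<otimes>\<^bsub>W\<^esub> y) \<otimes>\<^bsub>W\<^esub> cox_gen S m s \<otimes>\<^bsub>W\<^esub> (w \<otimes>\<^bsub>W\<^esub> y)"
    using op_conj[OF x y] ws(1) Wg.conj_conj[OF gen_in[OF ws(3)] ws(2) Q_carrier[OF y]] by simp
  then show ?thesis unfolding Q_def2 using ws Wg.m_closed[OF ws(2) Q_carrier[OF y]] by blast
qed

end




context coxsetup begin

definition rep :: "('a \<times> bool) list set \<Rightarrow> 'a" where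
  "rep q = (SOME s. s \<in> Rp \<and> (\<exists>w\<in>carrier W. q = inv\<^bsub>W\<^esub> w \<otimes>\<^bsub>W\<^esub> cox_gen S m s \<otimes>\<^bsub>W\<^esub> w))"

lemma rep_spec:
  assumes q: "q \<in> Q"
  shows "rep q \<in> Rp \<and> (\<exists>w\<in>carrier W. q = inv\<^bsub>W\<^esub> w \<otimes>\<^bsub>W\<^esub> cox_gen S m (rep q) \<otimes>\<^bsub>W\<^esub> w)"
  unfolding rep_def
proof (rule someI_ex)
  show "\<exists>s. s \<in> Rp \<and> (\<exists>w\<in>carrier W. q = inv\<^bsub>W\<^esub> w \<otimes>\<^bsub>W\<^esub> cox_gen S m s \<otimes>\<^bsub>W\<^esub> w)"
    using bspec[OF R_cover q] by auto
qed

lemma rep_unique: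
  assumes q: "q \<in> Q" and s: "s \<in> Rp" and w: "w \<in> carrier W"
    and qw: "q = inv\<^bsub>W\<^esub> w \<otimes>\<^bsub>W\<^esub> cox_gen S m s \<otimes>\<^bsub>W\<^esub> w"
  shows "rep q = s"
proof -
  obtain v where v: "v \<in> carrier W" "q = inv\<^bsub>W\<^esub> v \<otimes>\<^bsub>W\<^esub> cox_gen S m (rep q) \<otimes>\<^bsub>W\<^esub> v"
    using rep_spec[OF q] by auto
  have t: "rep q \<in> Rp" using rep_spec[OF q] by (rule conjunct1)
  have sS: "s \<in> S" and tS: "rep q \<in> S" using s t R_sub by auto
  have "cox_gen S m (rep q) = inv\<^bsub>W\<^esub> (inv\<^bsub>W\<^esub> v) \<otimes>\<^bsub>W\<^esub> q \<otimes>\<^bsub>W\<^esub> inv\<^bsub>W\<^esub> v"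
    by (rule Wg.conj_back[OF gen_in[OF tS] v(1) v(2)])
  also have "\<dots> = inv\<^bsub>W\<^esub> (w \<otimes>\<^bsub>W\<^esub> inv\<^bsub>W\<^esub> v) \<otimes>\<^bsub>W\<^esub> cox_gen S m s \<otimes>\<^bsub>W\<^esub> (w \<otimes>\<^bsub>W\<^esub> inv\<^bsub>W\<^esub> v)"
    unfolding qw by (rule Wg.conj_conj[OF gen_in[OF sS] w Wg.inv_closed[OF v(1)]])
  finally have "\<exists>u\<in>carrier W. cox_gen S m (rep q) = inv\<^bsub>W\<^esub> u \<otimes>\<^bsub>W\<^esub> cox_gen S m s \<otimes>\<^bsub>W\<^esub> u"
    by (rule bexI[OF _ Wg.m_closed[OF w Wg.inv_closed[OF v(1)]]])
  then have "s = rep q" by (rule mp[OF bspec[OF bspec[OF R_distinct s] t]])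
  then show ?thesis by simp
qed

lemma rep_gen: assumes s: "s \<in> Rp" shows "rep (cox_gen S m s) = s"
proof -
  have sS: "s \<in> S" using s R_sub by auto
  show ?thesis
    by (rule rep_unique[OF gen_Q[OF sS] s Wg.one_closed]) (simp add: gen_in[OF sS])
qed

lemma rep_op: assumes x: "x \<in> Q" and y: "y \<in> Q" shows "rep (quandle_op S m x y) = rep x"
proof -
  obtain w where w: "w \<in> carrier W" "x = inv\<^bsub>W\<^esub> w \<otimes>\<^bsub>W\<^esub> cox_gen S m (rep x) \<otimes>\<^bsub>W\<^esub> w"
    using rep_spec[OF x] by auto
  have t: "rep x \<in> Rp" using rep_spec[OF x] by (rule conjunct1)
  have tS: "rep x \<in> S" using t R_sub by auto
  have "quandle_op S m x y = inv\<^bsub>W\<^esub> (w \<otimes>\<^bsub>W\<^esub> y) \<otimes>\<^bsub>W\<^esub> cox_gen S m (rep x) \<otimes>\<^bsub>W\<^esub> (w \<otimes>\<^bsub>W\<^esub> y)"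
    using op_conj[OF x y] w(2) Wg.conj_conj[OF gen_in[OF tS] w(1) Q_carrier[OF y]] by simp
  then show ?thesis by (rule rep_unique[OF op_Q[OF x y] t Wg.m_closed[OF w(1) Q_carrier[OF y]]])
qed

abbreviation "G \<equiv> adjoint_group S m"
abbreviation "RA \<equiv> adjoint_relators S m"
abbreviation "Ab \<equiv> abelianization G"
abbreviation "cls \<equiv> ab_class G"

lemma G_group: "group G"
  unfolding adjoint_group_def by (rule group_presented)

sublocale Gg: group G by (rule G_group)

lemma adj_gen_eq: "adj_gen S m = pres_gen Q RA"
  by (rule ext) (simp add: adj_gen_def)

lemma e_in: "x \<in> Q \<Longrightarrow> adj_gen S m x \<in> carrier G"
  unfolding adj_gen_eq adjoint_group_def by (rule pres_gen_in)

lemma Ab_comm: "comm_group Ab"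
  unfolding abelianization_def by (rule Gg.derived_quot_is_comm_group)

sublocale Abg: comm_group Ab by (rule Ab_comm)

lemma cls_hom: "cls \<in> hom G Ab"
proof -
  have "cls = (\<lambda>a. derived G (carrier G) #>\<^bsub>G\<^esub> a)" by (rule ext) (simp add: ab_class_def)
  then show ?thesis unfolding abelianization_def
    using normal.r_coset_hom_Mod[OF Gg.derived_self_is_normal] by simp
qed

lemma cls_in: "g \<in> carrier G \<Longrightarrow> cls g \<in> carrier Ab"
  using cls_hom unfolding hom_def by (auto simp: Pi_iff)

lemma rel_lemma:
  assumes x: "x \<in> Q" and y: "y \<in> Q"
  shows "cls (adj_gen S m (quandle_op S m x y)) = cls (adj_gen S m x)"
proof -
  let ?xy = "quandle_op S m x y"
  let ?r = "[(y, False), (x, True), (y, True), (?xy, False)]"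
  have xy: "?xy \<in> Q" by (rule op_Q[OF x y])
  have rR: "?r \<in> RA" unfolding adjoint_relators_def using x y by auto
  have rl: "?r \<in> lists (Q \<times> UNIV)" using x y xy by simp
  have f: "pres_gen Q RA ` Q \<subseteq> carrier G"
    by (rule image_subsetI) (simp add: e_in[unfolded adj_gen_eq])
  have "pres_rel Q RA `` {?r} = \<one>\<^bsub>G\<^esub>" unfolding adjoint_group_def by (rule relator_one[OF rR rl])
  then have "ev G (pres_gen Q RA) ?r = \<one>\<^bsub>G\<^esub>" using class_ev[OF rl, of RA] unfolding adjoint_group_def by simp
  then have "cls (ev G (pres_gen Q RA) ?r) = \<one>\<^bsub>Ab\<^esub>" using hom_one[OF cls_hom G_group Abg.is_group] by simp
  moreover have "cls (ev G (pres_gen Q RA) ?r) = ev Ab (cls \<circ> pres_gen Q RA) ?r"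
    by (rule hom_ev[OF G_group Abg.is_group cls_hom f rl])
  ultimately have "ev Ab (cls \<circ> pres_gen Q RA) ?r = \<one>\<^bsub>Ab\<^esub>" by simp
  then have "inv\<^bsub>Ab\<^esub> cls (adj_gen S m y) \<otimes>\<^bsub>Ab\<^esub> (cls (adj_gen S m x) \<otimes>\<^bsub>Ab\<^esub> (cls (adj_gen S m y) \<otimes>\<^bsub>Ab\<^esub>
      (inv\<^bsub>Ab\<^esub> cls (adj_gen S m ?xy) \<otimes>\<^bsub>Ab\<^esub> \<one>\<^bsub>Ab\<^esub>))) = \<one>\<^bsub>Ab\<^esub>"
    by (simp add: adj_gen_eq)
  then have "cls (adj_gen S m x) = cls (adj_gen S m ?xy)"
    by (rule Abg.rel_cancel[OF cls_in[OF e_in[OF y]] cls_in[OF e_in[OF x]] cls_in[OF e_in[OF xy]]])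
  then show ?thesis by simp
qed


lemma W_class_one: "pres_rel S (coxeter_relators S m) `` {[]} = \<one>\<^bsub>W\<^esub>"
  unfolding coxeter_group_def by (simp add: pres_one)

lemma W_class_gen:
  assumes s: "s \<in> S"
  shows "pres_rel S (coxeter_relators S m) `` {[(s, b)]} = cox_gen S m s"
proof (cases b)
  case True then show ?thesis by (simp add: cox_gen_def pres_gen_def)
next
  case False
  then have "pres_rel S (coxeter_relators S m) `` {[(s, b)]} = inv\<^bsub>W\<^esub> cox_gen S m s"
    using pres_gen_inv[OF s, of "coxeter_relators S m"] by (simp add: cox_gen_def coxeter_group_def)
  then show ?thesis using gen_inv[OF s] by simp
qed

lemma conj_ab:
  "l \<in> lists (S \<times> UNIV) \<Longrightarrow> q \<in> Q \<Longrightarrow>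
    inv\<^bsub>W\<^esub> (pres_rel S (coxeter_relators S m) `` {l}) \<otimes>\<^bsub>W\<^esub> q \<otimes>\<^bsub>W\<^esub> (pres_rel S (coxeter_relators S m) `` {l}) \<in> Q \<and>
    cls (adj_gen S m (inv\<^bsub>W\<^esub> (pres_rel S (coxeter_relators S m) `` {l}) \<otimes>\<^bsub>W\<^esub> q \<otimes>\<^bsub>W\<^esub> (pres_rel S (coxeter_relators S m) `` {l})))
      = cls (adj_gen S m q)"
proof (induction l arbitrary: q)
  case Nil
  then show ?case using Q_carrier[OF Nil(2)] by (simp add: W_class_one)
next
  case (Cons a l)
  obtain s b where a: "a = (s, b)" by force
  have sS: "s \<in> S" and l: "l \<in> lists (S \<times> UNIV)" and l1: "[(s, b)] \<in> lists (S \<times> UNIV)"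
    using Cons(2) a by auto
  let ?w = "pres_rel S (coxeter_relators S m) `` {l}"
  let ?c = "cox_gen S m s"
  have wc: "?w \<in> carrier W" unfolding coxeter_group_def by (rule pres_class_in[OF l])
  have cq: "?c \<in> Q" by (rule gen_Q[OF sS])
  have "pres_rel S (coxeter_relators S m) `` {a # l} = ?c \<otimes>\<^bsub>W\<^esub> ?w"
    using pres_mult[OF l1 l, of "coxeter_relators S m"] W_class_gen[OF sS, of b] a
    by (simp add: coxeter_group_def)
  moreover have "inv\<^bsub>W\<^esub> (?c \<otimes>\<^bsub>W\<^esub> ?w) \<otimes>\<^bsub>W\<^esub> q \<otimes>\<^bsub>W\<^esub> (?c \<otimes>\<^bsub>W\<^esub> ?w)
      = inv\<^bsub>W\<^esub> ?w \<otimes>\<^bsub>W\<^esub> quandle_op S m q ?c \<otimes>\<^bsub>W\<^esub> ?w"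
    using Wg.conj_conj[OF Q_carrier[OF Cons(3)] gen_in[OF sS] wc] op_conj[OF Cons(3) cq] by simp
  moreover have "quandle_op S m q ?c \<in> Q" by (rule op_Q[OF Cons(3) cq])
  ultimately show ?case using Cons.IH[OF l, of "quandle_op S m q ?c"] rel_lemma[OF Cons(3) cq] by simp
qed

lemma conj_cls:
  assumes x: "x \<in> Q"
  shows "cls (adj_gen S m x) = cls (adj_gen S m (cox_gen S m (rep x)))"
proof -
  obtain w where w: "w \<in> carrier W" "x = inv\<^bsub>W\<^esub> w \<otimes>\<^bsub>W\<^esub> cox_gen S m (rep x) \<otimes>\<^bsub>W\<^esub> w"
    using rep_spec[OF x] by auto
  have t: "rep x \<in> Rp" using rep_spec[OF x] by (rule conjunct1)
  have tS: "rep x \<in> S" using t R_sub by auto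
  obtain l where l: "l \<in> lists (S \<times> UNIV)" "w = pres_rel S (coxeter_relators S m) `` {l}"
    using w(1) unfolding coxeter_group_def by (rule pres_classE)
  show ?thesis using conj_ab[OF l(1) gen_Q[OF tS]] w(2) l(2) by simp
qed


abbreviation "F \<equiv> free_Abelian_group Rp"

definition phi :: "(('a \<times> bool) list set \<times> bool) list set \<Rightarrow> 'a \<Rightarrow>\<^sub>0 int" where
  "phi A = ev F (\<lambda>q. frag_of (rep q)) (SOME a. a \<in> A)"

lemma f_img: "(\<lambda>q. frag_of (rep q)) ` Q \<subseteq> carrier F"
  using rep_spec by (auto simp: keys_frag_of)

lemma rels_F: "\<forall>r\<in>RA. r \<in> lists (Q \<times> UNIV) \<longrightarrow> ev F (\<lambda>q. frag_of (rep q)) r = \<one>\<^bsub>F\<^esub>"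
proof (intro ballI impI)
  fix r assume "r \<in> RA" "r \<in> lists (Q \<times> UNIV)"
  then obtain x y where r: "r = [(y, False), (x, True), (y, True), (quandle_op S m x y, False)]"
    and x: "x \<in> Q" and y: "y \<in> Q"
    unfolding adjoint_relators_def by auto
  have k: "Poly_Mapping.keys (frag_of (rep z)) \<subseteq> Rp" if "z \<in> Q" for z
    using rep_spec[OF that] by (simp add: keys_frag_of)
  show "ev F (\<lambda>q. frag_of (rep q)) r = \<one>\<^bsub>F\<^esub>"
    using k[OF x] k[OF y] k[OF op_Q[OF x y]] rep_op[OF x y] unfolding r by simp
qed

lemma phi_hom: "phi \<in> hom G F"
  using group.pres_hom(1)[OF group_free_Abelian_group f_img rels_F]
  unfolding adjoint_group_def phi_def[abs_def] .

lemma phi_class: "u \<in> lists (Q \<times> UNIV) \<Longrightarrow> phi (pres_rel Q RA `` {u}) = ev F (\<lambda>q. frag_of (rep q)) u"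
  using group.pres_hom(2)[OF group_free_Abelian_group f_img rels_F]
  unfolding phi_def by simp

lemma phi_gen: "x \<in> Q \<Longrightarrow> phi (adj_gen S m x) = frag_of (rep x)"
  using phi_class[of "[(x, True)]"] by (simp add: adj_gen_def pres_gen_def)

interpretation phg: group_hom G F phi
  using phi_hom by (simp add: group_hom_def group_hom_axioms_def G_group)

lemma phi_surj: "phi ` carrier G = carrier F"
proof
  show "phi ` carrier G \<subseteq> carrier F" using phi_hom unfolding hom_def by (auto simp: Pi_iff)
  show "carrier F \<subseteq> phi ` carrier G"
  proof
    fix c assume "c \<in> carrier F"
    then have "Poly_Mapping.keys c \<subseteq> Rp" by simp
    then show "c \<in> phi ` carrier G"
    proof (rule free_Abelian_group_induct[where P="\<lambda>c. c \<in> phi ` carrier G"])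
      have "phi \<one>\<^bsub>G\<^esub> = 0" by simp
      then show "0 \<in> phi ` carrier G" using Gg.one_closed by (metis image_eqI)
    next
      fix x y :: "'a \<Rightarrow>\<^sub>0 int"
      assume 2: "Poly_Mapping.keys x \<subseteq> Rp" "Poly_Mapping.keys y \<subseteq> Rp" "x \<in> phi ` carrier G" "y \<in> phi ` carrier G"
      obtain a where a: "a \<in> carrier G" "x = phi a" using 2 by auto
      obtain b where b: "b \<in> carrier G" "y = phi b" using 2 by auto
      have "phi (a \<otimes>\<^bsub>G\<^esub> inv\<^bsub>G\<^esub> b) = x - y"
        using a b 2(2) by simp
      then show "x - y \<in> phi ` carrier G" using Gg.m_closed[OF a(1) Gg.inv_closed[OF b(1)]] by (metis image_eqI)
    next
      fix s assume s: "s \<in> Rp"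
      have sS: "s \<in> S" using s R_sub by auto
      have "phi (adj_gen S m (cox_gen S m s)) = frag_of s"
        using phi_gen[OF gen_Q[OF sS]] rep_gen[OF s] by simp
      then show "frag_of s \<in> phi ` carrier G" using e_in[OF gen_Q[OF sS]] by (metis image_eqI)
    qed
  qed
qed

lemma derived_kernel: "derived G (carrier G) \<subseteq> kernel G F phi"
  unfolding derived_def
proof (rule Gg.generate_subgroup_incl[OF _ phg.subgroup_kernel])
  show "derived_set G (carrier G) \<subseteq> kernel G F phi"
  proof
    fix z assume "z \<in> derived_set G (carrier G)"
    then obtain a b where ab: "a \<in> carrier G" "b \<in> carrier G"
      "z = a \<otimes>\<^bsub>G\<^esub> b \<otimes>\<^bsub>G\<^esub> inv\<^bsub>G\<^esub> a \<otimes>\<^bsub>G\<^esub> inv\<^bsub>G\<^esub> b" by auto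
    have ka: "Poly_Mapping.keys (phi a) \<subseteq> Rp" "Poly_Mapping.keys (phi b) \<subseteq> Rp"
      using phg.hom_closed[OF ab(1)] phg.hom_closed[OF ab(2)] by simp_all
    have "phi z = 0" using ab ka by simp
    then show "z \<in> kernel G F phi" using ab by (simp add: kernel_def)
  qed
qed

lemma kernel_derived: "kernel G F phi \<subseteq> derived G (carrier G)"
proof -
  have fimg: "(\<lambda>s. cls (adj_gen S m (cox_gen S m s))) ` Rp \<subseteq> carrier Ab"
    using R_sub by (auto intro!: cls_in e_in gen_Q)
  obtain psi where psi: "psi \<in> hom F Ab" "\<And>s. s \<in> Rp \<Longrightarrow> psi (frag_of s) = cls (adj_gen S m (cox_gen S m s))"
    using Abg.free_Abelian_group_universal[OF fimg] by metis
  have comp: "psi \<circ> phi \<in> hom G Ab" by (rule hom_compose[OF phi_hom psi(1)])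
  have agree: "(psi \<circ> phi) g = cls g" if g: "g \<in> carrier G" for g
  proof (rule pres_hom_agree[OF Abg.is_group, of _ Q RA])
    show "psi \<circ> phi \<in> hom (presented_group Q RA) Ab" using comp unfolding adjoint_group_def .
    show "cls \<in> hom (presented_group Q RA) Ab" using cls_hom unfolding adjoint_group_def .
    show "g \<in> carrier (presented_group Q RA)" using g unfolding adjoint_group_def .
    fix x assume x: "x \<in> Q"
    have "(psi \<circ> phi) (adj_gen S m x) = cls (adj_gen S m x)"
      using phi_gen[OF x] psi(2)[OF conjunct1[OF rep_spec[OF x]]] conj_cls[OF x] by simp
    then show "(psi \<circ> phi) (pres_gen Q RA x) = cls (pres_gen Q RA x)" by (simp add: adj_gen_eq)
  qed
  show ?thesis
  proof
    fix g assume "g \<in> kernel G F phi"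
    then have g: "g \<in> carrier G" "phi g = 0" by (simp_all add: kernel_def)
    have "cls g = psi 0" using agree[OF g(1)] g(2) by simp
    also have "\<dots> = \<one>\<^bsub>Ab\<^esub>" using hom_one[OF psi(1) group_free_Abelian_group Abg.is_group] by simp
    also have "\<dots> = derived G (carrier G)" by (simp add: abelianization_def)
    finally have "derived G (carrier G) #>\<^bsub>G\<^esub> g = derived G (carrier G)" by (simp add: ab_class_def)
    then show "g \<in> derived G (carrier G)"
      using Gg.rcos_self[OF g(1) Gg.derived_is_subgroup[OF subset_refl]] by simp
  qed
qed

lemma kernel_eq: "kernel G F phi = derived G (carrier G)"
  using derived_kernel kernel_derived by (rule subset_antisym[rotated])

lemma image_coset: "g \<in> carrier G \<Longrightarrow> phi ` (kernel G F phi #>\<^bsub>G\<^esub> g) = {phi g}"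
  unfolding r_coset_def kernel_def using phg.hom_closed by force

lemma main_iso:
  "\<exists>h. h \<in> iso Ab F \<and> (\<forall>s\<in>Rp. h (cls (adj_gen S m (cox_gen S m s))) = frag_of s)"
proof (intro exI conjI ballI)
  show "(\<lambda>B. the_elem (phi ` B)) \<in> iso Ab F"
    using phg.FactGroup_iso_set[OF phi_surj] unfolding kernel_eq abelianization_def .
  fix s assume s: "s \<in> Rp"
  have sS: "s \<in> S" using s R_sub by auto
  have "phi ` cls (adj_gen S m (cox_gen S m s)) = {frag_of s}"
    using image_coset[OF e_in[OF gen_Q[OF sS]]] phi_gen[OF gen_Q[OF sS]] rep_gen[OF s]
    unfolding ab_class_def kernel_eq by simp
  then show "the_elem (phi ` cls (adj_gen S m (cox_gen S m s))) = frag_of s" by simp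
qed
end


theorem proposition2p4:
  fixes S :: "'a set" and m :: "'a \<Rightarrow> 'a \<Rightarrow> enat" and Rp :: "'a set"
  assumes finS: "finite S"
    and m_diag: "\<forall>s\<in>S. m s s = 1"
    and m_sym: "\<forall>s\<in>S. \<forall>t\<in>S. m s t = m t s"
    and m_ge2: "\<forall>s\<in>S. \<forall>t\<in>S. s \<noteq> t \<longrightarrow> 2 \<le> m s t"
    and R_sub: "Rp \<subseteq> S"
    and R_cover: "\<forall>q\<in>coxeter_quandle S m. \<exists>s\<in>Rp. \<exists>w\<in>carrier (coxeter_group S m).
                    q = inv\<^bsub>coxeter_group S m\<^esub> w \<otimes>\<^bsub>coxeter_group S m\<^esub> cox_gen S m s \<otimes>\<^bsub>coxeter_group S m\<^esub> w"
    and R_distinct: "\<forall>s\<in>Rp. \<forall>t\<in>Rp. (\<exists>w\<in>carrier (coxeter_group S m).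
                    cox_gen S m t = inv\<^bsub>coxeter_group S m\<^esub> w \<otimes>\<^bsub>coxeter_group S m\<^esub> cox_gen S m s \<otimes>\<^bsub>coxeter_group S m\<^esub> w)
                    \<longrightarrow> s = t"
  shows "(\<exists>h. h \<in> iso (abelianization (adjoint_group S m)) (free_Abelian_group Rp) \<and>
              (\<forall>s\<in>Rp. h (ab_class (adjoint_group S m) (adj_gen S m (cox_gen S m s))) = frag_of s))
         \<and> abelianization (adjoint_group S m) \<cong> free_Abelian_group {..<card Rp}"
  proof -
  interpret c: coxsetup S m Rp
    by (rule coxsetup.intro) (fact m_diag, fact R_sub, fact R_cover, fact R_distinct)
  obtain h where h: "h \<in> iso (abelianization (adjoint_group S m)) (free_Abelian_group Rp)"
    "\<forall>s\<in>Rp. h (ab_class (adjoint_group S m) (adj_gen S m (cox_gen S m s))) = frag_of s"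
    using c.main_iso by auto
  have fin: "finite Rp" using finS R_sub by (rule finite_subset[rotated])
  have i1: "abelianization (adjoint_group S m) \<cong> free_Abelian_group Rp" by (rule is_isoI[OF h(1)])
  have i2: "free_Abelian_group Rp \<cong> free_Abelian_group {..<card Rp}"
    using fin by (simp add: isomorphic_free_Abelian_groups eqpoll_iff_finite_card)
  show ?thesis using h(1) h(2) iso_trans[OF i1 i2] by auto
qed

end
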